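(* For every integer $x\geq 3$ and each $i\in[1,8]$, there exists a $D_i$-decomposition of $K^*_{(2x+1)\times 7}$.
   Context: For a simple graph $G$, $G^*$ is the digraph with vertex set $V(G)$ and arc set $\bigcup_{\{x,y\}\in E(G)}\{(x,y),(y,x)\}$. $K_{r\times s}$ is the complete multipartite simple graph with $r$ parts each of size $s$, and $K^*_{r\times s}=(K_{r\times s})^*$. A $D$-decomposition of a digraph $K$ is a set of subdigraphs of $K$, each isomorphic to $D$, such that every arc of $K$ lies in exactly one of them. For distinct vertices $v_0,\dots,v_6$, the digraphs $D_i[v_0,v_1,\dots,v_6]$ ($i\in[1,8]$) all have vertex set $\{v_0,\dots,v_6\}$ and the following arc sets: $D_1$: $(v_1,v_0),(v_1,v_2),(v_2,v_3),(v_3,v_4),(v_4,v_5),(v_5,v_6),(v_6,v_0)$; $D_2$: $(v_1,v_0),(v_2,v_1),(v_2,v_3),(v_3,v_4),(v_4,v_5),(v_5,v_6),(v_6,v_0)$; $D_3$: $(v_1,v_0),(v_1,v_2),(v_3,v_2),(v_3,v_4),(v_4,v_5),(v_5,v_6),(v_6,v_0)$; $D_4$: $(v_1,v_0),(v_1,v_2),(v_2,v_3),(v_4,v_3),(v_4,v_5),(v_5,v_6),(v_6,v_0)$; $D_5$: $(v_1,v_0),(v_2,v_1),(v_3,v_2),(v_3,v_4),(v_4,v_5),(v_5,v_6),(v_6,v_0)$; $D_6$: $(v_1,v_0),(v_2,v_1),(v_2,v_3),(v_3,v_4),(v_5,v_4),(v_5,v_6),(v_6,v_0)$; $D_7$: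 $(v_1,v_0),(v_1,v_2),(v_3,v_2),(v_3,v_4),(v_4,v_5),(v_6,v_5),(v_6,v_0)$; $D_8$: $(v_1,v_0),(v_2,v_1),(v_2,v_3),(v_4,v_3),(v_4,v_5),(v_5,v_6),(v_6,v_0)$. $D_i$ also denotes the isomorphism type of $D_i[v_0,\dots,v_6]$. *)

theory Defs
  imports Main
begin

type_synonym 'a digraph = "'a set \<times> ('a \<times> 'a) set"

definition verts :: "'a digraph \<Rightarrow> 'a set" where "verts G = fst G"
definition arcs :: "'a digraph \<Rightarrow> ('a \<times> 'a) set" where "arcs G = snd G"

text \<open>Symmetric digraph G* of the complete multipartite graph K_{r x s}:
  vertices (p,j) with part p < r and index j < s; arcs between vertices in different parts.\<close>
definition Kstar :: "nat \<Rightarrow> nat \<Rightarrow> (nat \<times> nat) digraph" where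
  "Kstar r s = ({0..<r} \<times> {0..<s},
     {(u, w). u \<in> {0..<r} \<times> {0..<s} \<and> w \<in> {0..<r} \<times> {0..<s} \<and> fst u \<noteq> fst w})"

text \<open>Arc patterns of D_1..D_8, as index pairs (a,b) meaning arc (v_a, v_b).\<close>
fun D_pattern :: "nat \<Rightarrow> (nat \<times> nat) list" where
  "D_pattern (Suc 0) = [(1,0),(1,2),(2,3),(3,4),(4,5),(5,6),(6,0)]"
| "D_pattern (Suc (Suc 0)) = [(1,0),(2,1),(2,3),(3,4),(4,5),(5,6),(6,0)]"
| "D_pattern (Suc (Suc (Suc 0))) = [(1,0),(1,2),(3,2),(3,4),(4,5),(5,6),(6,0)]"
| "D_pattern (Suc (Suc (Suc (Suc 0)))) = [(1,0),(1,2),(2,3),(4,3),(4,5),(5,6),(6,0)]"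
| "D_pattern (Suc (Suc (Suc (Suc (Suc 0))))) = [(1,0),(2,1),(3,2),(3,4),(4,5),(5,6),(6,0)]"
| "D_pattern (Suc (Suc (Suc (Suc (Suc (Suc 0)))))) = [(1,0),(2,1),(2,3),(3,4),(5,4),(5,6),(6,0)]"
| "D_pattern (Suc (Suc (Suc (Suc (Suc (Suc (Suc 0))))))) = [(1,0),(1,2),(3,2),(3,4),(4,5),(6,5),(6,0)]"
| "D_pattern (Suc (Suc (Suc (Suc (Suc (Suc (Suc (Suc 0)))))))) = [(1,0),(2,1),(2,3),(4,3),(4,5),(5,6),(6,0)]"
| "D_pattern _ = []"

text \<open>D_i[v_0,...,v_6] for a vertex assignment v (intended injective on {0..6}).\<close>
definition Dig :: "nat \<Rightarrow> (nat \<Rightarrow> 'a) \<Rightarrow> 'a digraph" where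
  "Dig i v = (v ` {0..6}, (\<lambda>(a, b). (v a, v b)) ` set (D_pattern i))"

definition digraph_iso :: "'a digraph \<Rightarrow> 'b digraph \<Rightarrow> bool" where
  "digraph_iso G H \<longleftrightarrow> (\<exists>f. bij_betw f (verts G) (verts H) \<and>
     (\<forall>x\<in>verts G. \<forall>y\<in>verts G. (x, y) \<in> arcs G \<longleftrightarrow> (f x, f y) \<in> arcs H))"

definition subdigraph :: "'a digraph \<Rightarrow> 'a digraph \<Rightarrow> bool" where
  "subdigraph H G \<longleftrightarrow> verts H \<subseteq> verts G \<and> arcs H \<subseteq> arcs G \<and>
     arcs H \<subseteq> verts H \<times> verts H"

definition is_decomposition :: "'b digraph \<Rightarrow> 'a digraph \<Rightarrow> 'a digraph set \<Rightarrow> bool" where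
  "is_decomposition D K \<D> \<longleftrightarrow>
     (\<forall>H\<in>\<D>. subdigraph H K \<and> digraph_iso H D) \<and>
     (\<forall>e\<in>arcs K. \<exists>!H. H \<in> \<D> \<and> e \<in> arcs H)"

end

theory Submission
  imports Defs
begin

definition PP :: "nat \<Rightarrow> int" where "PP k = [0,2,3,2,3,2,1] ! k"
definition JJ :: "nat \<Rightarrow> int" where "JJ k = [0,0,1,3,2,5,2] ! k"

definition gR :: "(nat \<times> nat) list \<Rightarrow> bool" where
 "gR pat \<longleftrightarrow> (\<forall>(a,b)\<in>set pat. a \<le> 6 \<and> b \<le> 6)"
definition gA :: "(nat \<times> nat) list \<Rightarrow> bool" where
 "gA pat \<longleftrightarrow> (\<forall>(a,b)\<in>set pat. (\<bar>PP b - PP a\<bar> = 2 \<and> (JJ b - JJ a) mod 7 = 0) \<or> (\<bar>PP b - PP a\<bar> = 1 \<and> (JJ b - JJ a) mod 7 \<noteq> 0))"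
definition gB :: "(nat \<times> nat) list \<Rightarrow> bool" where
 "gB pat \<longleftrightarrow> (\<forall>(a,b)\<in>set pat. \<forall>(a',b')\<in>set pat. \<forall>\<sigma>\<in>{1,-1::int}. PP b - PP a = \<sigma>*(PP b' - PP a') \<and> (JJ b - JJ a - \<sigma>*(JJ b' - JJ a')) mod 7 = 0 \<longrightarrow> (a,b)=(a',b') \<and> \<sigma> = 1)"
definition gC :: "(nat \<times> nat) list \<Rightarrow> bool" where
 "gC pat \<longleftrightarrow> (\<forall>E\<in>{1,2,3,4,5,6::int}. \<exists>(a,b)\<in>set pat. \<exists>\<epsilon>\<in>{1,-1::int}. \<epsilon>*(PP b - PP a) = 1 \<and> (\<epsilon>*(JJ b - JJ a) - E) mod 7 = 0)"
definition g2 :: "(nat \<times> nat) list \<Rightarrow> bool" where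
 "g2 pat \<longleftrightarrow> (\<exists>(a,b)\<in>set pat. (JJ b - JJ a) mod 7 = 0)"
definition good :: "(nat \<times> nat) list \<Rightarrow> bool" where
 "good pat \<longleftrightarrow> gR pat \<and> gA pat \<and> gB pat \<and> gC pat \<and> g2 pat"

lemma cD: "\<forall>a\<in>{0..6::nat}. \<forall>b\<in>{0..6}. a \<noteq> b \<longrightarrow> (JJ a - JJ b) mod 7 \<noteq> 0 \<or> \<bar>PP a - PP b\<bar> \<in> {1,2}"
proof -
  have e: "{0..6::nat} = {0,1,2,3,4,5,6}" by auto
  show ?thesis unfolding e by (simp add: PP_def JJ_def)
qed

lemma goods: "i \<in> {1..8} \<Longrightarrow> good (D_pattern i)"
proof -
  assume "i \<in> {1..8}"
  then have "i \<in> {1,2,3,4,5,6,7,8}" by auto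
  then show ?thesis by (auto simp: good_def gR_def gA_def gB_def gC_def g2_def PP_def JJ_def numeral_eq_Suc)
qed


lemma small_dvd: fixes m z :: int assumes "m dvd z" "\<bar>z\<bar> < m" shows "z = 0"
  using assms dvd_imp_le_int by force

lemma odd_dvd2: fixes x w :: int assumes "(2*x+1) dvd 2*w" shows "(2*x+1) dvd w"
proof -
  have "w = (x+1)*(2*w) - (2*x+1)*w" by algebra
  moreover have "(2*x+1) dvd (x+1)*(2*w) - (2*x+1)*w" using assms by simp
  ultimately show ?thesis by metis
qed

lemma nz: fixes x t e d :: int
  assumes "1 \<le> t" "t \<le> x" "e \<in> {1,-1}" "\<bar>d\<bar> \<in> {1,2}" "(2*x+1) dvd (e*d*t)"
  shows False
proof -
  have "\<bar>e*d*t\<bar> = \<bar>d\<bar> * t" using assms(1,3) by (auto simp: abs_mult)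
  moreover have "\<bar>d\<bar> * t \<le> 2*t" using assms(1,4) by auto
  ultimately have "\<bar>e*d*t\<bar> < 2*x+1" using assms(2) by linarith
  then have "e*d*t = 0" using small_dvd assms(5) by blast
  then show False using assms by auto
qed

lemma ballpD: "\<forall>(a,b)\<in>S. P a b \<Longrightarrow> (a,b) \<in> S \<Longrightarrow> P a b" by auto

lemma diff_inj:
  fixes x t t' e e' :: int
  assumes g: "good pat" and ab: "(a,b) \<in> set pat" and ab': "(a',b') \<in> set pat"
  and t: "1 \<le> t" "t \<le> x" and t': "1 \<le> t'" "t' \<le> x"
  and e: "e \<in> {1,-1}" and e': "e' \<in> {1,-1}"
  and dm: "(2*x+1) dvd (e*(PP b - PP a)*t - e'*(PP b' - PP a')*t')"
  and d7: "(7::int) dvd (e*(JJ b - JJ a) - e'*(JJ b' - JJ a'))"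
  shows "t = t' \<and> e = e' \<and> (a,b) = (a',b')"
proof -
  define \<delta> where "\<delta> = PP b - PP a"
  define \<delta>' where "\<delta>' = PP b' - PP a'"
  define \<Delta> where "\<Delta> = JJ b - JJ a"
  define \<Delta>' where "\<Delta>' = JJ b' - JJ a'"
  have cA: "\<forall>(a,b)\<in>set pat. (\<bar>PP b - PP a\<bar> = 2 \<and> (JJ b - JJ a) mod 7 = 0) \<or> (\<bar>PP b - PP a\<bar> = 1 \<and> (JJ b - JJ a) mod 7 \<noteq> 0)"
   using g unfolding good_def gA_def by (elim conjE) assumption
  have cB: "\<forall>(a,b)\<in>set pat. \<forall>(a',b')\<in>set pat. \<forall>\<sigma>\<in>{1,-1::int}. PP b - PP a = \<sigma>*(PP b' - PP a') \<and> (JJ b - JJ a - \<sigma>*(JJ b' - JJ a')) mod 7 = 0 \<longrightarrow> (a,b)=(a',b') \<and> \<sigma> = 1"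
    using g unfolding good_def gB_def by (elim conjE) assumption
  have A1: "(\<bar>\<delta>\<bar> = 2 \<and> \<Delta> mod 7 = 0) \<or> (\<bar>\<delta>\<bar> = 1 \<and> \<Delta> mod 7 \<noteq> 0)" using cA ab unfolding \<delta>_def \<Delta>_def by auto
  have A2: "(\<bar>\<delta>'\<bar> = 2 \<and> \<Delta>' mod 7 = 0) \<or> (\<bar>\<delta>'\<bar> = 1 \<and> \<Delta>' mod 7 \<noteq> 0)" using cA ab' unfolding \<delta>'_def \<Delta>'_def by auto
  have d7': "(7::int) dvd (e*\<Delta> - e'*\<Delta>')" using d7 unfolding \<Delta>_def \<Delta>'_def .
  have dm': "(2*x+1) dvd (e*\<delta>*t - e'*\<delta>'*t')" using dm unfolding \<delta>_def \<delta>'_def .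
  have ab7: "(7::int) dvd \<bar>z\<bar> \<longleftrightarrow> 7 dvd z" for z :: int by simp
  have eabs: "\<bar>e\<bar> = 1" "\<bar>e'\<bar> = 1" using e e' by auto
  have "7 dvd e*\<Delta> \<longleftrightarrow> (7::int) dvd e'*\<Delta>'"
  proof -
    have "e*\<Delta> = (e*\<Delta> - e'*\<Delta>') + e'*\<Delta>'" by simp
    then show ?thesis using d7' dvd_add_right_iff by metis
  qed
  then have "7 dvd \<Delta> \<longleftrightarrow> (7::int) dvd \<Delta>'"
    by (metis ab7 abs_mult eabs mult_1)
  then have same7: "(\<Delta> mod 7 = 0) = (\<Delta>' mod 7 = 0)" by (simp add: dvd_eq_mod_eq_0)
  have same: "\<bar>\<delta>\<bar> = \<bar>\<delta>'\<bar>" using same7 A1 A2 by auto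
  have key: "e*\<delta>*t = e'*\<delta>'*t'"
  proof (cases "\<bar>\<delta>\<bar> = 2")
    case True
    have d2: "\<delta> = 2 \<or> \<delta> = -2" "\<delta>' = 2 \<or> \<delta>' = -2" using True same by arith+
    define k where "k = \<delta> div 2"
    define k' where "k' = \<delta>' div 2"
    have kk: "\<delta> = 2*k" "\<delta>' = 2*k'" "k = 1 \<or> k = -1" "k' = 1 \<or> k' = -1" using d2 unfolding k_def k'_def by auto
    have "e*\<delta>*t - e'*\<delta>'*t' = 2*(e*k*t - e'*k'*t')" using kk by (simp add: algebra_simps)
    then have "(2*x+1) dvd (e*k*t - e'*k'*t')" using dm' odd_dvd2[of x "e*k*t - e'*k'*t'"] by simp
    moreover have "\<bar>e*k*t - e'*k'*t'\<bar> < 2*x+1"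
      using kk e e' t t' by auto
    ultimately have "e*k*t - e'*k'*t' = 0" using small_dvd by blast
    then show ?thesis using kk by simp
  next
    case False
    then have "\<bar>\<delta>\<bar> = 1" "\<bar>\<delta>'\<bar> = 1" using A1 same by auto
    then have d1: "\<delta> = 1 \<or> \<delta> = -1" "\<delta>' = 1 \<or> \<delta>' = -1" by arith+
    then have "\<bar>e*\<delta>*t - e'*\<delta>'*t'\<bar> < 2*x+1" using d1 e e' t t' by auto
    then show ?thesis using small_dvd[OF dm'] by simp
  qed
  have "\<bar>e*\<delta>*t\<bar> = \<bar>\<delta>\<bar>*t" "\<bar>e'*\<delta>'*t'\<bar> = \<bar>\<delta>'\<bar>*t'" using eabs t t' by (simp_all add: abs_mult)
  then have "\<bar>\<delta>\<bar>*t = \<bar>\<delta>\<bar>*t'" using key same by metis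
  moreover have "\<bar>\<delta>\<bar> > 0" using A1 by auto
  ultimately have tt: "t = t'" by simp
  have ed: "e*\<delta> = e'*\<delta>'" using key tt t by simp
  have ee: "e*e = 1" "e'*e'=1" using e e' by auto
  have s1: "e*e' \<in> {1,-1}" using e e' by auto
  have h1: "\<delta> = (e*e')*\<delta>'" by (metis ed ee(1) mult.assoc mult.commute mult_1)
  have "(7::int) dvd e*(e*\<Delta> - e'*\<Delta>')" using d7' by simp
  then have "(7::int) dvd (\<Delta> - (e*e')*\<Delta>')" by (simp add: right_diff_distrib ee mult.assoc[symmetric])
  then have h2: "(\<Delta> - (e*e')*\<Delta>') mod 7 = 0" by simp
  have X: "\<And>\<sigma>. \<sigma>\<in>{1,-1::int} \<Longrightarrow> PP b - PP a = \<sigma>*(PP b' - PP a') \<and> (JJ b - JJ a - \<sigma>*(JJ b' - JJ a')) mod 7 = 0 \<Longrightarrow> (a,b)=(a',b') \<and> \<sigma> = 1"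
  proof -
    fix \<sigma> :: int assume s: "\<sigma>\<in>{1,-1::int}" and h: "PP b - PP a = \<sigma>*(PP b' - PP a') \<and> (JJ b - JJ a - \<sigma>*(JJ b' - JJ a')) mod 7 = 0"
    have "\<forall>\<sigma>\<in>{1,-1::int}. PP b - PP a = \<sigma>*(PP b' - PP a') \<and> (JJ b - JJ a - \<sigma>*(JJ b' - JJ a')) mod 7 = 0 \<longrightarrow> (a,b)=(a',b') \<and> \<sigma> = 1"
      by (rule ballpD[OF ballpD[OF cB ab] ab'])
    then show "(a,b)=(a',b') \<and> \<sigma> = 1" using s h by (meson bspec mp)
  qed
  have "(a,b)=(a',b') \<and> e*e' = 1"
    by (rule X[OF s1 conjI[OF h1[unfolded \<delta>_def \<delta>'_def] h2[unfolded \<Delta>_def \<Delta>'_def]]])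
  then show ?thesis using tt e e' by auto
qed


definition vtx :: "int \<Rightarrow> int \<Rightarrow> int \<Rightarrow> int \<Rightarrow> int \<Rightarrow> nat \<Rightarrow> nat \<times> nat" where
  "vtx m t e p0 j0 k = (nat ((p0 + e * PP k * t) mod m), nat ((j0 + e * JJ k) mod 7))"

lemma vtx_eq_iff:
  assumes "m > 0"
  shows "vtx m t e p0 j0 a = vtx m t' e' p0' j0' b \<longleftrightarrow>
    m dvd (p0 + e*PP a*t - (p0' + e'*PP b*t')) \<and> (7::int) dvd (j0 + e*JJ a - (j0' + e'*JJ b))"
  using assms by (simp add: vtx_def eq_nat_nat_iff mod_eq_dvd_iff)

lemma bexpE: "\<exists>(a,b)\<in>S. P a b \<Longrightarrow> (\<And>a b. (a,b)\<in>S \<Longrightarrow> P a b \<Longrightarrow> Q) \<Longrightarrow> Q" by auto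

lemma exist_param:
  fixes x p q j l :: int
  assumes g: "good pat" and x: "1 \<le> x"
  and p: "0 \<le> p" "p < 2*x+1" and q: "0 \<le> q" "q < 2*x+1" and pq: "p \<noteq> q"
  shows "\<exists>t e a b. 1 \<le> t \<and> t \<le> x \<and> e \<in> {1,-1} \<and> (a,b) \<in> set pat \<and>
     (2*x+1) dvd (e*(PP b - PP a)*t - (q - p)) \<and> (7::int) dvd (e*(JJ b - JJ a) - (l - j))"
proof -
  define m where "m = 2*x+1"
  define d where "d = (q - p) mod m"
  have m0: "m > 0" using x m_def by simp
  have dm: "m dvd (d - (q - p))" unfolding d_def by (simp add: mod_eq_dvd_iff[symmetric])
  have d0: "0 \<le> d" "d < m" using m0 unfolding d_def by simp_all
  have dnz: "d \<noteq> 0"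
  proof
    assume "d = 0" then have "m dvd (q - p)" unfolding d_def by (simp add: dvd_eq_mod_eq_0)
    moreover have "\<bar>q - p\<bar> < m" using p q m_def by auto
    ultimately have "q - p = 0" using small_dvd by blast
    then show False using pq by simp
  qed
  define E where "E = (l - j) mod 7"
  have E7: "(7::int) dvd (E - (l - j))" unfolding E_def by (simp add: mod_eq_dvd_iff[symmetric])
  have E0: "0 \<le> E" "E < 7" unfolding E_def by simp_all
  have cA: "gA pat" and cC: "gC pat" and c2: "g2 pat" using g unfolding good_def by simp_all
  show ?thesis
  proof (cases "E = 0")
    case True
    from c2 obtain a b where ab: "(a,b) \<in> set pat" "(JJ b - JJ a) mod 7 = 0" unfolding g2_def by auto
    have "\<bar>PP b - PP a\<bar> = 2" using cA ab unfolding gA_def by auto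
    then have "PP b - PP a = 2 \<or> PP b - PP a = -2" by arith
    then obtain s :: int where s: "s \<in> {1,-1}" "PP b - PP a = 2*s" by auto
    have ss: "s*s = 1" using s by auto
    have J7: "(7::int) dvd (JJ b - JJ a)" using ab by (simp add: dvd_eq_mod_eq_0)
    have L7: "(7::int) dvd (l - j)" using E7 True by (simp add: dvd_diff_commute)
    have D7: "(7::int) dvd (e*(JJ b - JJ a) - (l - j))" for e using J7 L7 by simp
    show ?thesis
    proof (cases "even d")
      case True
      then obtain t where t: "d = 2*t" by auto
      have "s*(PP b - PP a)*t = d" using s(2) ss t by (metis mult.assoc mult.left_commute mult_1)
      moreover have "1 \<le> t" "t \<le> x" using t d0 dnz m_def by auto
      ultimately show ?thesis using ab(1) s(1) dm D7 m_def by metis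
    next
      case False
      then have "even (m - d)" using m_def by auto
      then obtain t where t: "m - d = 2*t" by (rule evenE)
      have "(-s)*(PP b - PP a)*t = d - m" using s(2) ss t by (metis add.commute add_diff_cancel_left' minus_diff_eq minus_mult_left mult.assoc mult.left_commute mult_1)
      moreover have "1 \<le> t" "t \<le> x" using t d0 dnz m_def False by auto
      moreover have "m dvd (d - m - (q - p))" using dm by (metis diff_diff_eq2 diff_right_commute dvd_diff dvd_refl)
      moreover have "-s \<in> {1,-1}" using s by auto
      ultimately show ?thesis using ab(1) D7 m_def by metis
    qed
  next
    case False
    then have E16: "1 \<le> E" "E \<le> 6" using E0 by auto
    have CC: "\<And>E'. 1 \<le> E' \<Longrightarrow> E' \<le> 6 \<Longrightarrow> \<exists>a b \<epsilon>. (a,b) \<in> set pat \<and> \<epsilon> \<in> {1,-1} \<and> \<epsilon>*(PP b - PP a) = 1 \<and> (\<epsilon>*(JJ b - JJ a) - E') mod 7 = 0"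
    proof -
      fix E' :: int assume "1 \<le> E'" "E' \<le> 6"
      then have "E' \<in> {1,2,3,4,5,6}" by auto
      then have "\<exists>(a,b)\<in>set pat. \<exists>\<epsilon>\<in>{1,-1::int}. \<epsilon>*(PP b - PP a) = 1 \<and> (\<epsilon>*(JJ b - JJ a) - E') mod 7 = 0"
        using cC unfolding gC_def by (meson bspec)
      then obtain a b where ab: "(a,b) \<in> set pat" and r: "\<exists>\<epsilon>\<in>{1,-1::int}. \<epsilon>*(PP b - PP a) = 1 \<and> (\<epsilon>*(JJ b - JJ a) - E') mod 7 = 0"
        by (rule bexpE)
      from r obtain \<epsilon> where "\<epsilon>\<in>{1,-1::int}" "\<epsilon>*(PP b - PP a) = 1 \<and> (\<epsilon>*(JJ b - JJ a) - E') mod 7 = 0" by (rule bexE)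
      then show "\<exists>a b \<epsilon>. (a,b) \<in> set pat \<and> \<epsilon> \<in> {1,-1} \<and> \<epsilon>*(PP b - PP a) = 1 \<and> (\<epsilon>*(JJ b - JJ a) - E') mod 7 = 0"
        using ab by (intro exI[of _ a] exI[of _ b] exI[of _ \<epsilon>]) simp
    qed
    show ?thesis
    proof (cases "d \<le> x")
      case True
      from CC[OF E16] obtain a b \<epsilon> where h: "(a,b) \<in> set pat" "\<epsilon> \<in> {1,-1}" "\<epsilon>*(PP b - PP a) = 1" "(\<epsilon>*(JJ b - JJ a) - E) mod 7 = 0" by (elim exE conjE) (rule that; assumption)
      have "\<epsilon>*(PP b - PP a)*d = d" using h(3) by simp
      moreover have "(7::int) dvd (\<epsilon>*(JJ b - JJ a) - (l - j))"
      proof -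
        have "(7::int) dvd (\<epsilon>*(JJ b - JJ a) - E)" using h(4) by (simp add: dvd_eq_mod_eq_0)
        from dvd_add[OF this E7] show ?thesis by (simp add: algebra_simps)
      qed
      moreover have "1 \<le> d" using d0 dnz by auto
      moreover note dm' = dm[unfolded m_def]
      ultimately show ?thesis using h(1,2) True
        by (intro exI[of _ d] exI[of _ \<epsilon>] exI[of _ a] exI[of _ b]) simp
    next
      case False
      have "1 \<le> 7 - E" "7 - E \<le> 6" using E16 by auto
      from CC[OF this] obtain a b \<epsilon> where h: "(a,b) \<in> set pat" "\<epsilon> \<in> {1,-1}" "\<epsilon>*(PP b - PP a) = 1" "(\<epsilon>*(JJ b - JJ a) - (7 - E)) mod 7 = 0" by (elim exE conjE) (rule that; assumption)
      define t where "t = m - d"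
      have "(-\<epsilon>)*(PP b - PP a)*t = d - m" using h(3) t_def by (simp add: algebra_simps)
      moreover have "m dvd (d - m - (q - p))" using dvd_diff[OF dm dvd_refl[of m]] by (simp add: algebra_simps)
      moreover have "(7::int) dvd ((-\<epsilon>)*(JJ b - JJ a) - (l - j))"
      proof -
        have X: "(7::int) dvd (\<epsilon>*(JJ b - JJ a) - (7 - E))" using h(4) by (simp add: dvd_eq_mod_eq_0)
        have eq: "(-\<epsilon>)*(JJ b - JJ a) - (l - j) = - (\<epsilon>*(JJ b - JJ a) - (7 - E)) + (E - (l - j)) - 7" by simp
        have "(7::int) dvd (- (\<epsilon>*(JJ b - JJ a) - (7 - E)) + (E - (l - j)) - 7)"
        proof -
          have Y: "(7::int) dvd - (\<epsilon>*(JJ b - JJ a) - (7 - E))" using X by (simp add: dvd_diff_commute)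
          show ?thesis by (rule dvd_diff[OF dvd_add[OF Y E7] dvd_refl])
        qed
        then show ?thesis using eq by (simp add: algebra_simps)
      qed
      moreover have "1 \<le> t" "t \<le> x" using t_def d0 False m_def by auto
      moreover have "-\<epsilon> \<in> {1,-1}" using h(2) by auto
      ultimately show ?thesis using h(1) unfolding m_def
        by (intro exI[of _ t] exI[of _ "-\<epsilon>"] exI[of _ a] exI[of _ b]) simp
    qed
  qed
qed



lemma verts_Dig: "verts (Dig i w) = w ` {0..6}" by (simp add: Dig_def verts_def)
lemma arcs_Dig: "arcs (Dig i w) = (\<lambda>(a,b). (w a, w b)) ` set (D_pattern i)" by (simp add: Dig_def arcs_def)
lemma verts_K: "verts (Kstar r s) = {0..<r} \<times> {0..<s}" by (simp add: Kstar_def verts_def)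
lemma arcs_K: "arcs (Kstar r s) = {(u, w). u \<in> {0..<r} \<times> {0..<s} \<and> w \<in> {0..<r} \<times> {0..<s} \<and> fst u \<noteq> fst w}"
  by (simp add: Kstar_def arcs_def)

lemma iso_Dig:
  assumes inj: "inj_on w {0..6}" and r: "gR (D_pattern i)"
  shows "digraph_iso (Dig i w) (Dig i id)"
proof -
  let ?f = "the_inv_into {0..6} w"
  have bij: "bij_betw ?f (w ` {0..6}) {0..6}"
    using bij_betw_the_inv_into[OF inj_on_imp_bij_betw[OF inj]] .
  have rr: "\<And>a b. (a,b) \<in> set (D_pattern i) \<Longrightarrow> a \<in> {0..6} \<and> b \<in> {0..6}"
    using r unfolding gR_def by auto
  have idimg: "(\<lambda>(a,b). (id a, id b)) ` S = S" for S :: "(nat \<times> nat) set" by auto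
  show ?thesis unfolding digraph_iso_def verts_Dig arcs_Dig idimg
  proof (intro exI conjI)
    show "bij_betw ?f (w ` {0..6}) (id ` {0..6})" using bij by simp
    show "\<forall>x\<in>w ` {0..6}. \<forall>y\<in>w ` {0..6}. (x,y) \<in> (\<lambda>(a,b). (w a, w b)) ` set (D_pattern i) \<longleftrightarrow> (?f x, ?f y) \<in> set (D_pattern i)"
    proof (intro ballI)
      fix x y assume "x \<in> w ` {0..6}" "y \<in> w ` {0..6}"
      then obtain a b where a: "a \<in> {0..6}" "x = w a" and b: "b \<in> {0..6}" "y = w b" by auto
      have fa: "?f x = a" using the_inv_into_f_f[OF inj a(1)] a(2) by simp
      have fb: "?f y = b" using the_inv_into_f_f[OF inj b(1)] b(2) by simp
      have "(x,y) \<in> (\<lambda>(a,b). (w a, w b)) ` set (D_pattern i) \<longleftrightarrow> (a,b) \<in> set (D_pattern i)"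
      proof
        assume "(x,y) \<in> (\<lambda>(a,b). (w a, w b)) ` set (D_pattern i)"
        then obtain a' b' where ab': "(a',b') \<in> set (D_pattern i)" "w a' = w a" "w b' = w b"
          using a(2) b(2) by auto
        have "a' = a" using inj_onD[OF inj ab'(2)] rr[OF ab'(1)] a(1) by blast
        moreover have "b' = b" using inj_onD[OF inj ab'(3)] rr[OF ab'(1)] b(1) by blast
        ultimately show "(a,b) \<in> set (D_pattern i)" using ab'(1) by simp
      next
        assume "(a,b) \<in> set (D_pattern i)"
        then show "(x,y) \<in> (\<lambda>(a,b). (w a, w b)) ` set (D_pattern i)" using a(2) b(2) by force
      qed
      then show "(x,y) \<in> (\<lambda>(a,b). (w a, w b)) ` set (D_pattern i) \<longleftrightarrow> (?f x, ?f y) \<in> set (D_pattern i)"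
        using fa fb by simp
    qed
  qed
qed

lemma main:
  fixes x :: nat and i :: nat
  assumes x1: "x \<ge> 1" and g: "good (D_pattern i)"
  shows "\<exists>\<D>. is_decomposition (Dig i (id::nat\<Rightarrow>nat)) (Kstar (2*x+1) 7) \<D>"
proof -
  define X :: int where "X = int x"
  define m :: int where "m = 2*X+1"
  have m0: "m > 0" unfolding m_def X_def by simp
  have mx: "m = int (2*x+1)" unfolding m_def X_def by simp
  have X1: "1 \<le> X" using x1 X_def by simp
  have cR: "gR (D_pattern i)" and cA: "gA (D_pattern i)" using g unfolding good_def by simp_all
  have rr: "\<And>a b. (a,b) \<in> set (D_pattern i) \<Longrightarrow> a \<in> {0..6} \<and> b \<in> {0..6}"
    using cR unfolding gR_def by auto
  have d12: "\<And>a b. (a,b) \<in> set (D_pattern i) \<Longrightarrow> \<bar>PP b - PP a\<bar> \<in> {1,2}"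
    using cA unfolding gA_def by auto
  define \<D> where "\<D> = {Dig i (vtx m t e p0 j0) | t e p0 j0. 1 \<le> t \<and> t \<le> X \<and> e \<in> {1,-1}}"
  have natlt: "nat (z mod m) < 2*x+1" for z
  proof -
    have "0 \<le> z mod m" "z mod m < m" using m0 by simp_all
    then show ?thesis using mx by linarith
  qed
  have inrange: "vtx m t e p0 j0 k \<in> {0..<2*x+1} \<times> {0..<7}" for t e p0 j0 k
    unfolding vtx_def using natlt by (simp add: nat_less_iff)
  have fstne: "fst (vtx m t e p0 j0 a) \<noteq> fst (vtx m t e p0 j0 b)"
    if ab: "(a,b) \<in> set (D_pattern i)" and t: "1 \<le> t" "t \<le> X" and e: "e \<in> {1,-1}" for a b t e p0 j0
  proof
    assume "fst (vtx m t e p0 j0 a) = fst (vtx m t e p0 j0 b)"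
    then have "(p0 + e*PP a*t) mod m = (p0 + e*PP b*t) mod m"
      unfolding vtx_def using m0 by (simp add: eq_nat_nat_iff)
    then have "m dvd ((p0 + e*PP b*t) - (p0 + e*PP a*t))" by (simp add: mod_eq_dvd_iff dvd_diff_commute)
    then have "m dvd (e*(PP b - PP a)*t)" by (simp add: algebra_simps)
    then show False using nz[OF t e d12[OF ab]] unfolding m_def by blast
  qed
  have injv: "inj_on (vtx m t e p0 j0) {0..6}"
    if t: "1 \<le> t" "t \<le> X" and e: "e \<in> {1,-1}" for t e p0 j0
  proof (rule inj_onI)
    fix a b assume a: "a \<in> {0..6::nat}" and b: "b \<in> {0..6::nat}" and eq: "vtx m t e p0 j0 a = vtx m t e p0 j0 b"
    show "a = b"
    proof (rule ccontr)
      assume ne: "a \<noteq> b"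
      note dvc = vtx_eq_iff[OF m0, THEN iffD1, OF eq]
      note dv = conjunct1[OF dvc] conjunct2[OF dvc]
      have "(JJ a - JJ b) mod 7 \<noteq> 0 \<or> \<bar>PP a - PP b\<bar> \<in> {1,2}" by (rule mp[OF bspec[OF bspec[OF cD a] b] ne])
      then show False
      proof
        assume h: "(JJ a - JJ b) mod 7 \<noteq> 0"
        have "(7::int) dvd (e*(JJ a - JJ b))" using dv(2) by (simp add: algebra_simps)
        then have "(7::int) dvd (JJ a - JJ b)" using e by (auto simp: dvd_diff_commute)
        then show False using h by simp
      next
        assume h: "\<bar>PP a - PP b\<bar> \<in> {1,2}"
        have "m dvd (e*(PP a - PP b)*t)" using dv(1) by (simp add: algebra_simps)
        then show False using nz[OF t e h] unfolding m_def by blast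
      qed
    qed
  qed
  have part1: "\<forall>H\<in>\<D>. subdigraph H (Kstar (2*x+1) 7) \<and> digraph_iso H (Dig i id)"
  proof
    fix H assume "H \<in> \<D>"
    then obtain t e p0 j0 where H: "H = Dig i (vtx m t e p0 j0)" and t: "1 \<le> t" "t \<le> X" and e: "e \<in> {1,-1}"
      unfolding \<D>_def by blast
    have "subdigraph H (Kstar (2*x+1) 7)"
      unfolding subdigraph_def H verts_Dig arcs_Dig verts_K arcs_K
    proof (intro conjI)
      show "vtx m t e p0 j0 ` {0..6} \<subseteq> {0..<2*x+1} \<times> {0..<7}" using inrange by blast
      show "(\<lambda>(a,b). (vtx m t e p0 j0 a, vtx m t e p0 j0 b)) ` set (D_pattern i) \<subseteq>
        {(u, w). u \<in> {0..<2*x+1} \<times> {0..<7} \<and> w \<in> {0..<2*x+1} \<times> {0..<7} \<and> fst u \<noteq> fst w}"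
      proof (rule subsetI)
        fix u assume "u \<in> (\<lambda>(a,b). (vtx m t e p0 j0 a, vtx m t e p0 j0 b)) ` set (D_pattern i)"
        then obtain a b where ab: "(a,b) \<in> set (D_pattern i)" and u: "u = (vtx m t e p0 j0 a, vtx m t e p0 j0 b)" by auto
        have "vtx m t e p0 j0 a \<in> {0..<2*x+1} \<times> {0..<7}" "vtx m t e p0 j0 b \<in> {0..<2*x+1} \<times> {0..<7}"
          using inrange by blast+
        then show "u \<in> {(u, w). u \<in> {0..<2*x+1} \<times> {0..<7} \<and> w \<in> {0..<2*x+1} \<times> {0..<7} \<and> fst u \<noteq> fst w}"
          unfolding u using fstne[OF ab t e] by simp
      qed
      show "(\<lambda>(a,b). (vtx m t e p0 j0 a, vtx m t e p0 j0 b)) ` set (D_pattern i) \<subseteq>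
        vtx m t e p0 j0 ` {0..6} \<times> vtx m t e p0 j0 ` {0..6}"
        using rr by fastforce
    qed
    moreover have "digraph_iso H (Dig i id)" unfolding H by (rule iso_Dig[OF injv[OF t e] cR])
    ultimately show "subdigraph H (Kstar (2*x+1) 7) \<and> digraph_iso H (Dig i id)" by blast
  qed
  have part2: "\<forall>ar\<in>arcs (Kstar (2*x+1) 7). \<exists>!H. H \<in> \<D> \<and> ar \<in> arcs H"
  proof
    fix ar assume "ar \<in> arcs (Kstar (2*x+1) 7)"
    then obtain p j q l where ar: "ar = ((p,j),(q,l))" and rg: "p < 2*x+1" "j < 7" "q < 2*x+1" "l < 7" and pq: "p \<noteq> q"
      unfolding arcs_K by auto
    have "\<exists>t e a b. 1 \<le> t \<and> t \<le> X \<and> e \<in> {1,-1} \<and> (a,b) \<in> set (D_pattern i) \<and>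
       (2*X+1) dvd (e*(PP b - PP a)*t - (int q - int p)) \<and> (7::int) dvd (e*(JJ b - JJ a) - (int l - int j))"
      by (rule exist_param[OF g X1]) (use rg pq X_def in auto)
    then obtain t e a b where t: "1 \<le> t" "t \<le> X" and e: "e \<in> {1,-1}" and ab: "(a,b) \<in> set (D_pattern i)"
      and dm: "m dvd (e*(PP b - PP a)*t - (int q - int p))" and d7: "(7::int) dvd (e*(JJ b - JJ a) - (int l - int j))"
      unfolding m_def by blast
    define p0 where "p0 = int p - e*PP a*t"
    define j0 where "j0 = int j - e*JJ a"
    define H0 where "H0 = Dig i (vtx m t e p0 j0)"
    have pm: "int p mod m = int p" "int q mod m = int q" using rg mx by simp_all
    have jm: "int j mod 7 = int j" "int l mod 7 = int l" using rg by simp_all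
    have va: "vtx m t e p0 j0 a = (p,j)" unfolding vtx_def p0_def j0_def using pm jm by simp
    have vb: "vtx m t e p0 j0 b = (q,l)"
    proof -
      have "(p0 + e*PP b*t) mod m = int q mod m"
        unfolding mod_eq_dvd_iff p0_def using dm by (simp add: algebra_simps)
      moreover have "(j0 + e*JJ b) mod 7 = int l mod 7"
        unfolding mod_eq_dvd_iff j0_def using d7 by (simp add: algebra_simps)
      ultimately show ?thesis unfolding vtx_def using pm jm by simp
    qed
    have H0D: "H0 \<in> \<D>" unfolding H0_def \<D>_def using t e by blast
    have arH0: "ar \<in> arcs H0" unfolding H0_def arcs_Dig ar using ab va vb by force
    show "\<exists>!H. H \<in> \<D> \<and> ar \<in> arcs H"
    proof (rule ex1I[of _ H0])
      show "H0 \<in> \<D> \<and> ar \<in> arcs H0" using H0D arH0 by blast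
      fix H assume "H \<in> \<D> \<and> ar \<in> arcs H"
      then obtain t' e' p0' j0' where H: "H = Dig i (vtx m t' e' p0' j0')" and t': "1 \<le> t'" "t' \<le> X" and e': "e' \<in> {1,-1}"
        and arH: "ar \<in> arcs H"
        unfolding \<D>_def by blast
      from arH obtain a' b' where ab': "(a',b') \<in> set (D_pattern i)" and
        va': "vtx m t' e' p0' j0' a' = (p,j)" and vb': "vtx m t' e' p0' j0' b' = (q,l)"
        unfolding H arcs_Dig ar by auto
      have A: "m dvd (p0' + e'*PP a'*t' - (p0 + e*PP a*t))" "(7::int) dvd (j0' + e'*JJ a' - (j0 + e*JJ a))"
        using va' va vtx_eq_iff[OF m0, of t' e' p0' j0' a' t e p0 j0 a] by auto
      have B: "m dvd (p0' + e'*PP b'*t' - (p0 + e*PP b*t))" "(7::int) dvd (j0' + e'*JJ b' - (j0 + e*JJ b))"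
        using vb' vb vtx_eq_iff[OF m0, of t' e' p0' j0' b' t e p0 j0 b] by auto
      have "m dvd ((p0' + e'*PP b'*t' - (p0 + e*PP b*t)) - (p0' + e'*PP a'*t' - (p0 + e*PP a*t)))"
        using A(1) B(1) by (rule dvd_diff[rotated])
      then have C1: "(2*X+1) dvd (e'*(PP b' - PP a')*t' - e*(PP b - PP a)*t)"
        unfolding m_def by (simp add: algebra_simps)
      have "(7::int) dvd ((j0' + e'*JJ b' - (j0 + e*JJ b)) - (j0' + e'*JJ a' - (j0 + e*JJ a)))"
        using A(2) B(2) by (rule dvd_diff[rotated])
      then have C2: "(7::int) dvd (e'*(JJ b' - JJ a') - e*(JJ b - JJ a))"
        by (simp add: algebra_simps)
      from diff_inj[OF g ab' ab t' t e' e C1 C2] have same: "t' = t" "e' = e" "a' = a" "b' = b" by auto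
      have "vtx m t' e' p0' j0' = vtx m t e p0 j0"
      proof
        fix k
        have "m dvd (p0' - p0)" using A(1) same by simp
        moreover have "(7::int) dvd (j0' - j0)" using A(2) same by simp
        ultimately have "m dvd (p0' + e'*PP k*t' - (p0 + e*PP k*t))" "(7::int) dvd (j0' + e'*JJ k - (j0 + e*JJ k))"
          using same by simp_all
        then show "vtx m t' e' p0' j0' k = vtx m t e p0 j0 k" using vtx_eq_iff[OF m0] by blast
      qed
      then show "H = H0" unfolding H H0_def by simp
    qed
  qed
  show ?thesis unfolding is_decomposition_def using part1 part2 by blast
qed


theorem lemma3p4:
  fixes x i :: nat
  assumes "x \<ge> 3" and "i \<in> {1..8}"
  shows "\<exists>\<D>. is_decomposition (Dig i (id :: nat \<Rightarrow> nat)) (Kstar (2 * x + 1) 7) \<D>"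
  using main[OF _ goods[OF assms(2)]] assms(1) by simp

end
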